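(* Let $(C_n)_{n\ge1}$ be a family of reversible circuits, where $C_n$ acts on $n$ bits and consists only of Toffoli gates arranged in $\mathcal{D}(n)\ge 1$ layers, layer $\ell$ containing $m_\ell\ge 1$ Toffoli gates acting on pairwise disjoint triples of bits; let $\mathcal{S}(n)=\sum_{\ell}m_\ell$ be the total number of gates and $\Delta(n)=\mathcal{S}(n)/\mathcal{D}(n)$. Let $\tau(n)>0$ be the energy bound. Let $T(n)$ be the total running time of the standard parallel implementation of $C_n$ on $n$ qubits, in which layer $\ell$ is implemented by the constant Hamiltonian $\lambda_\ell\sum_{j=1}^{m_\ell}G_{\ell,j}$ (with $G_{\ell,j}$ the Toffoli gate of that layer acting on its triple of qubits, tensored with the identity elsewhere) with $\lambda_\ell>0$ chosen so that $p\big(\lambda_\ell\sum_j G_{\ell,j}\big)=\tau(n)$, applied for the least time $t_\ell>0$ for which it realises $\prod_j G_{\ell,j}$ up to a global phase, so that $T(n)=\sum_\ell t_\ell$. Then the same computation can be performed using coherent parallelisation in time $O\big(T(n)/\Delta(n)\big)$: there exist a piecewise-constant Hamiltonian $H_n(t)$ on $n$ qubits with $p(H_n(t))\le\tau(n)$ for all $t$ and a time $T_{\#}(n)=O\big(T(n)/\Delta(n)\big)$ such that $\mathcal{T}\exp\big(-i\int_0^{T_{\#}(n)}H_n(t')\,dt'\big)$ equals, up to a global phase, the unitary $U_{C_n}$ that maps each computational basis state $|x\rangle$ to $|C_n(x)\rangle$.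
   Context: For a Hermitian operator $A$ on a finite-dimensional Hilbert space, $p(A)=h_{\max}-h_{\min}$, the difference between its largest and smallest eigenvalues. The Toffoli gate is the 3-qubit unitary (Hermitian) permutation matrix $|a,b,c\rangle\mapsto|a,b,c\oplus ab\rangle$. $\mathcal{T}$ denotes the time-ordering operator. "Coherent parallelisation" of a layer of gates $G_1,\dots,G_m$ acting on disjoint subsystems means implementing it with a Hamiltonian proportional to the product/tensor product $\prod_j G_j$ rather than to the sum $\sum_j G_j$. *)

theory Defs
  imports "Jordan_Normal_Form.Char_Poly" "HOL-Library.Landau_Symbols"
begin

definition hermitian_mat :: "complex mat \<Rightarrow> bool" where
  "hermitian_mat A \<longleftrightarrow> dim_row A = dim_col A \<and>
     (\<forall>i<dim_row A. \<forall>j<dim_row A. A $$ (i,j) = cnj (A $$ (j,i)))"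

text \<open>p(A) = largest eigenvalue minus smallest eigenvalue (eigenvalues of a
  Hermitian matrix are real; we take real parts).\<close>
definition spread :: "complex mat \<Rightarrow> real" where
  "spread A = Max (Re ` {k. eigenvalue A k}) - Min (Re ` {k. eigenvalue A k})"

definition mexp :: "complex mat \<Rightarrow> complex mat" where
  "mexp A = mat (dim_row A) (dim_col A)
     (\<lambda>(i,j). \<Sum>k. (A ^\<^sub>m k) $$ (i,j) / of_nat (fact k))"

definition perm_mat :: "nat \<Rightarrow> (nat \<Rightarrow> nat) \<Rightarrow> complex mat" where
  "perm_mat n f = mat (2^n) (2^n) (\<lambda>(i,j). if i = f j then 1 else 0)"

text \<open>A gate is a triple (a,b,c): control bits a,b, target bit c.
  Basis states of n bits are encoded as naturals x < 2^n, bit i being \<open>bit x i\<close>.\<close>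
type_synonym gate = "nat \<times> nat \<times> nat"
type_synonym layer = "gate list"
type_synonym circuit = "layer list"

definition gate_bits :: "gate \<Rightarrow> nat set" where
  "gate_bits g = (case g of (a,b,c) \<Rightarrow> {a,b,c})"

definition valid_gate :: "nat \<Rightarrow> gate \<Rightarrow> bool" where
  "valid_gate n g = (case g of (a,b,c) \<Rightarrow>
      a < n \<and> b < n \<and> c < n \<and> a \<noteq> b \<and> a \<noteq> c \<and> b \<noteq> c)"

definition valid_layer :: "nat \<Rightarrow> layer \<Rightarrow> bool" where
  "valid_layer n L \<longleftrightarrow> L \<noteq> [] \<and> (\<forall>g\<in>set L. valid_gate n g) \<and>
     (\<forall>i<length L. \<forall>j<length L. i \<noteq> j \<longrightarrow> gate_bits (L!i) \<inter> gate_bits (L!j) = {})"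

definition valid_circuit :: "nat \<Rightarrow> circuit \<Rightarrow> bool" where
  "valid_circuit n C \<longleftrightarrow> C \<noteq> [] \<and> (\<forall>L\<in>set C. valid_layer n L)"

definition toffoli_fun :: "gate \<Rightarrow> nat \<Rightarrow> nat" where
  "toffoli_fun g x = (case g of (a,b,c) \<Rightarrow>
      if bit x a \<and> bit x b then flip_bit c x else x)"

definition layer_fun :: "layer \<Rightarrow> nat \<Rightarrow> nat" where
  "layer_fun L x = fold toffoli_fun L x"

definition circuit_fun :: "circuit \<Rightarrow> nat \<Rightarrow> nat" where
  "circuit_fun C x = fold layer_fun C x"

text \<open>Toffoli gate on its triple of qubits tensored with identity elsewhere.\<close>
definition toffoli_mat :: "nat \<Rightarrow> gate \<Rightarrow> complex mat" where
  "toffoli_mat n g = perm_mat n (toffoli_fun g)"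

definition circuit_unitary :: "nat \<Rightarrow> circuit \<Rightarrow> complex mat" where
  "circuit_unitary n C = perm_mat n (circuit_fun C)"

definition gates_sum :: "nat \<Rightarrow> layer \<Rightarrow> complex mat" where
  "gates_sum n L = foldr (\<lambda>g M. toffoli_mat n g + M) L (0\<^sub>m (2^n) (2^n))"

definition gates_prod :: "nat \<Rightarrow> layer \<Rightarrow> complex mat" where
  "gates_prod n L = foldr (\<lambda>g M. toffoli_mat n g * M) L (1\<^sub>m (2^n))"

definition std_lambda :: "nat \<Rightarrow> real \<Rightarrow> layer \<Rightarrow> real" where
  "std_lambda n tau L = (THE lam. lam > 0 \<and>
      spread (complex_of_real lam \<cdot>\<^sub>m gates_sum n L) = tau)"

definition std_time :: "nat \<Rightarrow> real \<Rightarrow> layer \<Rightarrow> real" where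
  "std_time n tau L = Inf {t. t > 0 \<and> (\<exists>\<phi>::real.
      mexp ((- \<i> * complex_of_real (t * std_lambda n tau L)) \<cdot>\<^sub>m gates_sum n L)
        = exp (\<i> * complex_of_real \<phi>) \<cdot>\<^sub>m gates_prod n L)}"

definition std_total_time :: "nat \<Rightarrow> real \<Rightarrow> circuit \<Rightarrow> real" where
  "std_total_time n tau C = (\<Sum>L\<leftarrow>C. std_time n tau L)"

definition circuit_size :: "circuit \<Rightarrow> nat" where
  "circuit_size C = (\<Sum>L\<leftarrow>C. length L)"

definition circuit_depth :: "circuit \<Rightarrow> nat" where
  "circuit_depth C = length C"

text \<open>A piecewise-constant Hamiltonian is a list of segments (duration, H),
  applied in order starting at time 0.  Its time-ordered exponential
  T exp(-i int_0^T H) is the product of the segment propagators, later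
  segments to the left.\<close>
definition pc_duration :: "(real \<times> complex mat) list \<Rightarrow> real" where
  "pc_duration Hs = (\<Sum>(d,H)\<leftarrow>Hs. d)"

definition time_ordered_exp :: "nat \<Rightarrow> (real \<times> complex mat) list \<Rightarrow> complex mat" where
  "time_ordered_exp n Hs =
     fold (\<lambda>(d,H) U. mexp ((- \<i> * complex_of_real d) \<cdot>\<^sub>m H) * U) Hs (1\<^sub>m (2^n))"

definition valid_pc_hamiltonian :: "nat \<Rightarrow> real \<Rightarrow> (real \<times> complex mat) list \<Rightarrow> bool" where
  "valid_pc_hamiltonian n tau Hs \<longleftrightarrow> (\<forall>(d,H)\<in>set Hs.
      d > 0 \<and> H \<in> carrier_mat (2^n) (2^n) \<and> hermitian_mat H \<and> spread H \<le> tau)"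

end

theory Submission
  imports Defs "Jordan_Normal_Form.Spectral_Radius"
begin


lemma row_col_entry:
  assumes "A \<in> carrier_mat N N" "B \<in> carrier_mat N N" "i < N" "j < N"
  shows "row A i \<bullet> col B j = (\<Sum>r<N. A $$ (i,r) * B $$ (r,j))"
  using assms by (auto simp: scalar_prod_def lessThan_atLeast0 intro!: sum.cong)

lemma mult_entry:
  assumes "A \<in> carrier_mat N N" "B \<in> carrier_mat N N" "i < N" "j < N"
  shows "(A * B) $$ (i,j) = (\<Sum>r<N. A $$ (i,r) * B $$ (r,j))"
  using assms by (simp add: row_col_entry)

lemma pow_smult:
  fixes X :: "complex mat"
  assumes "X \<in> carrier_mat N N"
  shows "(c \<cdot>\<^sub>m X) ^\<^sub>m k = (c ^ k) \<cdot>\<^sub>m (X ^\<^sub>m k)"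
proof (induction k)
  case 0 then show ?case using assms by (auto intro!: eq_matI)
next
  case (Suc k)
  have "(c \<cdot>\<^sub>m X) ^\<^sub>m Suc k = ((c ^ k) \<cdot>\<^sub>m (X ^\<^sub>m k)) * (c \<cdot>\<^sub>m X)" using Suc by simp
  also have "\<dots> = (c ^ Suc k) \<cdot>\<^sub>m (X ^\<^sub>m Suc k)"
  proof (rule eq_matI)
    fix i j assume "i < dim_row ((c ^ Suc k) \<cdot>\<^sub>m (X ^\<^sub>m Suc k))" "j < dim_col ((c ^ Suc k) \<cdot>\<^sub>m (X ^\<^sub>m Suc k))"
    then have ij: "i < N" "j < N" using assms by auto
    have "(((c ^ k) \<cdot>\<^sub>m (X ^\<^sub>m k)) * (c \<cdot>\<^sub>m X)) $$ (i,j) = (\<Sum>r<N. ((c ^ k) \<cdot>\<^sub>m (X ^\<^sub>m k)) $$ (i,r) * (c \<cdot>\<^sub>m X) $$ (r,j))"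
      by (rule mult_entry) (use assms ij in auto)
    also have "\<dots> = c ^ Suc k * (\<Sum>r<N. (X ^\<^sub>m k) $$ (i,r) * X $$ (r,j))"
      using assms ij by (auto simp: sum_distrib_left ac_simps intro!: sum.cong)
    also have "\<dots> = ((c ^ Suc k) \<cdot>\<^sub>m (X ^\<^sub>m Suc k)) $$ (i,j)"
      using assms ij by (simp add: row_col_entry[where N=N])
    finally show "(((c ^ k) \<cdot>\<^sub>m (X ^\<^sub>m k)) * (c \<cdot>\<^sub>m X)) $$ (i,j) = ((c ^ Suc k) \<cdot>\<^sub>m (X ^\<^sub>m Suc k)) $$ (i,j)" .
  qed (use assms in auto)
  finally show ?case .
qed

lemma mexp_carrier: "A \<in> carrier_mat N N \<Longrightarrow> mexp A \<in> carrier_mat N N"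
  by (auto simp: mexp_def)

lemma mexp_entry: "A \<in> carrier_mat N N \<Longrightarrow> i < N \<Longrightarrow> j < N \<Longrightarrow>
   mexp A $$ (i,j) = (\<Sum>k. (A ^\<^sub>m k) $$ (i,j) / of_nat (fact k))"
  by (auto simp: mexp_def)

lemma exp_sums_c: "(\<lambda>k. (z::complex) ^ k / of_nat (fact k)) sums exp z"
proof -
  have "(\<lambda>k. z ^ k /\<^sub>R fact k) = (\<lambda>k. z ^ k / of_nat (fact k))"
    by (auto simp: scaleR_conv_of_real divide_inverse mult.commute)
  with exp_converges[of z] show ?thesis by simp
qed

definition msz :: "nat \<Rightarrow> complex mat \<Rightarrow> real" where
  "msz N A = (\<Sum>i<N. \<Sum>j<N. norm (A $$ (i,j)))"

lemma msz_ge: "i < N \<Longrightarrow> j < N \<Longrightarrow> norm (A $$ (i,j)) \<le> msz N A"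
proof -
  assume ij: "i < N" "j < N"
  have "norm (A $$ (i,j)) \<le> (\<Sum>j<N. norm (A $$ (i,j)))"
    using ij by (intro member_le_sum) auto
  also have "\<dots> \<le> msz N A" unfolding msz_def
    using ij by (intro member_le_sum[where f="\<lambda>i. \<Sum>j<N. norm (A $$ (i,j))"]) (auto intro: sum_nonneg)
  finally show ?thesis .
qed

lemma msz_nonneg: "0 \<le> msz N A"
  unfolding msz_def by (intro sum_nonneg) auto

lemma pow_bound:
  assumes A: "A \<in> carrier_mat N N"
  shows "i < N \<Longrightarrow> j < N \<Longrightarrow> norm ((A ^\<^sub>m k) $$ (i,j)) \<le> (real N * msz N A) ^ k"
proof (induction k arbitrary: i j)
  case 0 then show ?case using A by auto
next
  case (Suc k)
  have nn: "0 \<le> real N * msz N A" using msz_nonneg[of N A] by simp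
  have "norm ((A ^\<^sub>m Suc k) $$ (i,j)) = norm (\<Sum>r<N. (A ^\<^sub>m k) $$ (i,r) * A $$ (r,j))"
    using Suc A by (simp add: row_col_entry[where N=N])
  also have "\<dots> \<le> (\<Sum>r<N. norm ((A ^\<^sub>m k) $$ (i,r)) * norm (A $$ (r,j)))"
    by (rule order_trans[OF norm_sum]) (simp add: norm_mult)
  also have "\<dots> \<le> (\<Sum>r<N. (real N * msz N A) ^ k * msz N A)"
    using Suc zero_le_power[OF nn, of k] by (intro sum_mono mult_mono msz_ge) (auto intro: msz_ge msz_nonneg)
  also have "\<dots> = (real N * msz N A) ^ Suc k" by (simp add: ac_simps)
  finally show ?case .
qed

lemma pow_summable:
  fixes A :: "complex mat"
  assumes A: "A \<in> carrier_mat N N" and ij: "i < N" "j < N"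
  shows "summable (\<lambda>k. norm ((A ^\<^sub>m k) $$ (i,j) / of_nat (fact k)))"
proof (rule summable_comparison_test)
  show "\<exists>N0. \<forall>k\<ge>N0. norm (norm ((A ^\<^sub>m k) $$ (i,j) / of_nat (fact k))) \<le> (real N * msz N A) ^ k / fact k"
    using pow_bound[OF A ij] by (auto simp: norm_divide intro!: divide_right_mono)
  have "summable (\<lambda>k. (real N * msz N A) ^ k /\<^sub>R fact k)" by (rule summable_exp_generic)
  then show "summable (\<lambda>k. (real N * msz N A) ^ k / fact k)" by (simp add: divide_inverse mult.commute)
qed



lemma pow_col_eigen:
  fixes A :: "complex mat"
  assumes A: "A \<in> carrier_mat N N" and x: "x < N"
    and col: "\<And>r. r < N \<Longrightarrow> A $$ (r,x) = (if r = x then \<mu> else 0)"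
  shows "r < N \<Longrightarrow> (A ^\<^sub>m k) $$ (r,x) = (if r = x then \<mu> ^ k else 0)"
proof (induction k arbitrary: r)
  case 0 then show ?case using A x by auto
next
  case (Suc k)
  have "(A ^\<^sub>m Suc k) $$ (r,x) = (\<Sum>s<N. (A ^\<^sub>m k) $$ (r,s) * A $$ (s,x))"
    using Suc A x by (simp add: row_col_entry[where N=N])
  also have "\<dots> = (\<Sum>s<N. if s = x then (A ^\<^sub>m k) $$ (r,x) * \<mu> else 0)"
    using col by (intro sum.cong) auto
  also have "\<dots> = (A ^\<^sub>m k) $$ (r,x) * \<mu>" using x by simp
  finally show ?case using Suc by auto
qed

lemma mexp_col_eigen:
  fixes A :: "complex mat"
  assumes A: "A \<in> carrier_mat N N" and x: "x < N"
    and col: "\<And>r. r < N \<Longrightarrow> A $$ (r,x) = (if r = x then \<mu> else 0)"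
    and r: "r < N"
  shows "mexp A $$ (r,x) = (if r = x then exp \<mu> else 0)"
proof -
  have "mexp A $$ (r,x) = (\<Sum>k. (if r = x then \<mu> ^ k else 0) / of_nat (fact k))"
    using mexp_entry[OF A r x] pow_col_eigen[OF A x col r] by simp
  also have "\<dots> = (if r = x then exp \<mu> else 0)"
    using sums_unique[OF exp_sums_c[of \<mu>]] by auto
  finally show ?thesis .
qed

lemma pow_invol:
  fixes G :: "complex mat"
  assumes G: "G \<in> carrier_mat N N" and GG: "G * G = 1\<^sub>m N"
  shows "G ^\<^sub>m k = (if even k then 1\<^sub>m N else G)"
proof (induction k)
  case 0 then show ?case using G by auto
next
  case (Suc k) then show ?case using G GG by auto
qed

lemma mexp_invol:
  fixes G :: "complex mat"
  assumes G: "G \<in> carrier_mat N N" and GG: "G * G = 1\<^sub>m N" and ij: "i < N" "j < N"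
  shows "mexp (z \<cdot>\<^sub>m G) $$ (i,j) =
     (exp z + exp (-z)) / 2 * (if i = j then 1 else 0) + (exp z - exp (-z)) / 2 * G $$ (i,j)"
proof -
  define d :: complex where "d = (if i = j then 1 else 0)"
  define g where "g = G $$ (i,j)"
  have zG: "z \<cdot>\<^sub>m G \<in> carrier_mat N N" using G by auto
  have "mexp (z \<cdot>\<^sub>m G) $$ (i,j) = (\<Sum>k. z ^ k * (if even k then d else g) / of_nat (fact k))"
  proof -
    have e: "((z \<cdot>\<^sub>m G) ^\<^sub>m k) $$ (i, j) = z ^ k * (if even k then d else g)" for k
    proof -
      have "((z \<cdot>\<^sub>m G) ^\<^sub>m k) = z ^ k \<cdot>\<^sub>m (G ^\<^sub>m k)" by (rule pow_smult[OF G])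
      moreover have "(z ^ k \<cdot>\<^sub>m (G ^\<^sub>m k)) $$ (i,j) = z ^ k * (G ^\<^sub>m k) $$ (i,j)"
        using ij G by (intro index_smult_mat(1)) auto
      moreover have "(G ^\<^sub>m k) $$ (i,j) = (if even k then d else g)"
        unfolding pow_invol[OF G GG] d_def g_def using ij by auto
      ultimately show ?thesis by simp
    qed
    show ?thesis unfolding mexp_entry[OF zG ij] e by simp
  qed
  also have "(\<lambda>k. z ^ k * (if even k then d else g) / of_nat (fact k)) =
      (\<lambda>k. (d + g) / 2 * (z ^ k / of_nat (fact k)) + (d - g) / 2 * ((-z) ^ k / of_nat (fact k)))"
  proof
    fix k
    show "z ^ k * (if even k then d else g) / of_nat (fact k) =
      (d + g) / 2 * (z ^ k / of_nat (fact k)) + (d - g) / 2 * ((-z) ^ k / of_nat (fact k))"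
    proof -
      define w where "w = z ^ k / of_nat (fact k)"
      have lhs: "z ^ k * (if even k then d else g) / of_nat (fact k) = (if even k then d else g) * w"
        unfolding w_def by (simp add: field_simps)
      have mz: "(-z) ^ k / of_nat (fact k) = (if even k then w else - w)"
        unfolding w_def by (cases "even k") (simp_all add: power_minus_odd)
      show ?thesis unfolding lhs mz w_def[symmetric]
        by (cases "even k") (simp_all add: algebra_simps add_divide_distrib diff_divide_distrib)
    qed
  qed
  also have "(\<Sum>k. (d + g) / 2 * (z ^ k / of_nat (fact k)) + (d - g) / 2 * ((-z) ^ k / of_nat (fact k)))
      = (d + g) / 2 * exp z + (d - g) / 2 * exp (-z)"
    by (intro sums_unique[symmetric] sums_add sums_mult exp_sums_c)
  also have "\<dots> = (exp z + exp (-z)) / 2 * d + (exp z - exp (-z)) / 2 * g"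
    by (simp add: field_simps)
  finally show ?thesis by (simp add: d_def g_def)
qed

lemma pascal_sum:
  fixes f :: "nat \<Rightarrow> nat \<Rightarrow> complex"
  shows "(\<Sum>a\<le>k. of_nat (k choose a) * (f (Suc a) (k - a) + f a (Suc k - a))) =
         (\<Sum>a\<le>Suc k. of_nat (Suc k choose a) * f a (Suc k - a))"
proof -
  have R: "(\<Sum>a\<le>Suc k. of_nat (Suc k choose a) * f a (Suc k - a)) =
      f 0 (Suc k) + (\<Sum>a\<le>k. of_nat (k choose a) * f (Suc a) (k - a))
                  + (\<Sum>a\<le>k. of_nat (k choose Suc a) * f (Suc a) (k - a))"
    by (subst sum.atMost_Suc_shift) (simp add: sum.distrib algebra_simps)
  have L2: "(\<Sum>a\<le>k. of_nat (k choose a) * f a (Suc k - a)) =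
      f 0 (Suc k) + (\<Sum>a\<le>k. of_nat (k choose Suc a) * f (Suc a) (k - a))"
  proof (cases k)
    case 0 then show ?thesis by simp
  next
    case (Suc k')
    have "(\<Sum>a\<le>k. of_nat (k choose a) * f a (Suc k - a)) =
       f 0 (Suc k) + (\<Sum>a\<le>k'. of_nat (k choose Suc a) * f (Suc a) (k - a))"
      unfolding Suc by (subst sum.atMost_Suc_shift) simp
    also have "(\<Sum>a\<le>k'. of_nat (k choose Suc a) * f (Suc a) (k - a)) =
        (\<Sum>a\<le>k. of_nat (k choose Suc a) * f (Suc a) (k - a))"
      unfolding Suc by (simp add: binomial_eq_0)
    finally show ?thesis .
  qed
  show ?thesis unfolding R by (simp add: sum.distrib algebra_simps L2)
qed



lemma pow_comm:
  fixes X Y :: "complex mat"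
  assumes X: "X \<in> carrier_mat N N" and Y: "Y \<in> carrier_mat N N" and XY: "X * Y = Y * X"
  shows "Y ^\<^sub>m b * X = X * Y ^\<^sub>m b"
proof (induction b)
  case 0 then show ?case using X Y by simp
next
  case (Suc b)
  have Yb: "Y ^\<^sub>m b \<in> carrier_mat N N" using Y by simp
  have "Y ^\<^sub>m Suc b * X = Y ^\<^sub>m b * (Y * X)" using assoc_mult_mat[OF Yb Y X] by simp
  also have "\<dots> = (Y ^\<^sub>m b * X) * Y" using assoc_mult_mat[OF Yb X Y] XY by simp
  also have "\<dots> = X * Y ^\<^sub>m Suc b" using assoc_mult_mat[OF X Yb Y] Suc by simp
  finally show ?case .
qed

lemma step_mat:
  fixes X Y :: "complex mat"
  assumes X: "X \<in> carrier_mat N N" and Y: "Y \<in> carrier_mat N N" and XY: "X * Y = Y * X"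
  shows "X ^\<^sub>m a * Y ^\<^sub>m b * (X + Y) = X ^\<^sub>m Suc a * Y ^\<^sub>m b + X ^\<^sub>m a * Y ^\<^sub>m Suc b"
proof -
  have Xa: "X ^\<^sub>m a \<in> carrier_mat N N" and Yb: "Y ^\<^sub>m b \<in> carrier_mat N N" using X Y by auto
  have "X ^\<^sub>m a * Y ^\<^sub>m b * (X + Y) = X ^\<^sub>m a * Y ^\<^sub>m b * X + X ^\<^sub>m a * Y ^\<^sub>m b * Y"
    using mult_add_distrib_mat[OF mult_carrier_mat[OF Xa Yb] X Y] by simp
  also have "X ^\<^sub>m a * Y ^\<^sub>m b * X = X ^\<^sub>m a * (Y ^\<^sub>m b * X)" using assoc_mult_mat[OF Xa Yb X] by simp
  also have "\<dots> = X ^\<^sub>m a * (X * Y ^\<^sub>m b)" using pow_comm[OF X Y XY] by simp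
  also have "\<dots> = X ^\<^sub>m Suc a * Y ^\<^sub>m b" using assoc_mult_mat[OF Xa X Yb] by simp
  also have "X ^\<^sub>m a * Y ^\<^sub>m b * Y = X ^\<^sub>m a * Y ^\<^sub>m Suc b" using assoc_mult_mat[OF Xa Yb Y] by simp
  finally show ?thesis .
qed

lemma binom_entry:
  fixes X Y :: "complex mat"
  assumes X: "X \<in> carrier_mat N N" and Y: "Y \<in> carrier_mat N N" and XY: "X * Y = Y * X"
  shows "i < N \<Longrightarrow> j < N \<Longrightarrow> ((X + Y) ^\<^sub>m k) $$ (i,j) =
     (\<Sum>a\<le>k. of_nat (k choose a) * (X ^\<^sub>m a * Y ^\<^sub>m (k - a)) $$ (i,j))"
proof (induction k arbitrary: i j)
  case 0 then show ?case using X Y by simp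
next
  case (Suc k)
  have S: "X + Y \<in> carrier_mat N N" using X Y by simp
  have "((X + Y) ^\<^sub>m Suc k) $$ (i,j) = (\<Sum>r<N. ((X + Y) ^\<^sub>m k) $$ (i,r) * (X + Y) $$ (r,j))"
    using Suc.prems S by (simp add: row_col_entry[where N=N] del: index_add_mat)
  also have "\<dots> = (\<Sum>r<N. (\<Sum>a\<le>k. of_nat (k choose a) * (X ^\<^sub>m a * Y ^\<^sub>m (k - a)) $$ (i,r)) * (X + Y) $$ (r,j))"
    using Suc by (intro sum.cong) auto
  also have "\<dots> = (\<Sum>a\<le>k. of_nat (k choose a) * (\<Sum>r<N. (X ^\<^sub>m a * Y ^\<^sub>m (k - a)) $$ (i,r) * (X + Y) $$ (r,j)))"
    by (simp add: sum_distrib_right sum_distrib_left ac_simps sum.swap[of _ "{..<N}"])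
  also have "\<dots> = (\<Sum>a\<le>k. of_nat (k choose a) * ((X ^\<^sub>m a * Y ^\<^sub>m (k - a)) * (X + Y)) $$ (i,j))"
  proof (intro sum.cong refl arg_cong2[where f="(*)"])
    fix a
    show "(\<Sum>r<N. (X ^\<^sub>m a * Y ^\<^sub>m (k - a)) $$ (i,r) * (X + Y) $$ (r,j)) = ((X ^\<^sub>m a * Y ^\<^sub>m (k - a)) * (X + Y)) $$ (i,j)"
      by (rule mult_entry[symmetric]) (use X Y Suc.prems in auto)
  qed
  also have "\<dots> = (\<Sum>a\<le>k. of_nat (k choose a) * ((X ^\<^sub>m Suc a * Y ^\<^sub>m (k - a)) $$ (i,j) + (X ^\<^sub>m a * Y ^\<^sub>m (Suc k - a)) $$ (i,j)))"
  proof (intro sum.cong refl arg_cong2[where f="(*)"])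
    fix a assume a: "a \<in> {..k}"
    have e: "Suc (k - a) = Suc k - a" using a by auto
    show "((X ^\<^sub>m a * Y ^\<^sub>m (k - a)) * (X + Y)) $$ (i,j) = (X ^\<^sub>m Suc a * Y ^\<^sub>m (k - a)) $$ (i,j) + (X ^\<^sub>m a * Y ^\<^sub>m (Suc k - a)) $$ (i,j)"
      unfolding step_mat[OF X Y XY] e[symmetric] using X Y Suc.prems by simp
  qed
  also have "\<dots> = (\<Sum>a\<le>Suc k. of_nat (Suc k choose a) * (X ^\<^sub>m a * Y ^\<^sub>m (Suc k - a)) $$ (i,j))"
    using pascal_sum[of k "\<lambda>a b. (X ^\<^sub>m a * Y ^\<^sub>m b) $$ (i,j)"] by simp
  finally show ?case .
qed

lemma mexp_add:
  fixes X Y :: "complex mat"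
  assumes X: "X \<in> carrier_mat N N" and Y: "Y \<in> carrier_mat N N" and XY: "X * Y = Y * X"
  shows "mexp (X + Y) = mexp X * mexp Y"
proof (rule eq_matI)
  have S: "X + Y \<in> carrier_mat N N" using X Y by simp
  fix i j assume "i < dim_row (mexp X * mexp Y)" "j < dim_col (mexp X * mexp Y)"
  then have ij: "i < N" "j < N" using mexp_carrier[OF X] mexp_carrier[OF Y] by auto
  define x where "x = (\<lambda>r k. (X ^\<^sub>m k) $$ (i,r) / of_nat (fact k))"
  define y where "y = (\<lambda>r k. (Y ^\<^sub>m k) $$ (r,j) / of_nat (fact k))"
  have "(mexp X * mexp Y) $$ (i,j) = (\<Sum>r<N. mexp X $$ (i,r) * mexp Y $$ (r,j))"
    by (rule mult_entry) (use ij mexp_carrier[OF X] mexp_carrier[OF Y] in auto)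
  also have "\<dots> = (\<Sum>r<N. suminf (x r) * suminf (y r))"
    using ij by (intro sum.cong refl) (simp add: mexp_entry[OF X] mexp_entry[OF Y] x_def y_def)
  finally have P: "(mexp X * mexp Y) $$ (i,j) = (\<Sum>r<N. suminf (x r) * suminf (y r))" .
  have cs: "(\<lambda>k. \<Sum>a\<le>k. x r a * y r (k - a)) sums (suminf (x r) * suminf (y r))" if r: "r \<in> {..<N}" for r
    by (rule Cauchy_product_sums) (use r ij pow_summable[OF X] pow_summable[OF Y] in \<open>auto simp: x_def y_def\<close>)
  have ss: "(\<lambda>k. \<Sum>r<N. \<Sum>a\<le>k. x r a * y r (k - a)) sums (\<Sum>r<N. suminf (x r) * suminf (y r))"
    by (rule sums_sum) (rule cs)
  have eqk: "(\<Sum>r<N. \<Sum>a\<le>k. x r a * y r (k - a)) = ((X + Y) ^\<^sub>m k) $$ (i,j) / of_nat (fact k)" for k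
  proof -
    have "(\<Sum>r<N. \<Sum>a\<le>k. x r a * y r (k - a)) =
        (\<Sum>a\<le>k. (\<Sum>r<N. (X ^\<^sub>m a) $$ (i,r) * (Y ^\<^sub>m (k - a)) $$ (r,j)) / (of_nat (fact a) * of_nat (fact (k - a))))"
      unfolding x_def y_def by (subst sum.swap) (simp add: sum_divide_distrib)
    also have "\<dots> = (\<Sum>a\<le>k. (X ^\<^sub>m a * Y ^\<^sub>m (k - a)) $$ (i,j) / (of_nat (fact a) * of_nat (fact (k - a))))"
      using ij X Y by (intro sum.cong refl) (simp add: row_col_entry[where N=N])
    also have "\<dots> = (\<Sum>a\<le>k. of_nat (k choose a) * (X ^\<^sub>m a * Y ^\<^sub>m (k - a)) $$ (i,j)) / of_nat (fact k)"
      unfolding sum_divide_distrib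
    proof (intro sum.cong refl)
      fix a assume a: "a \<in> {..k}"
      have "(of_nat (k choose a) :: complex) = of_nat (fact k) / (of_nat (fact a) * of_nat (fact (k - a)))"
        using a binomial_fact[of a k] by simp
      then show "(X ^\<^sub>m a * Y ^\<^sub>m (k - a)) $$ (i,j) / (of_nat (fact a) * of_nat (fact (k - a))) =
           of_nat (k choose a) * (X ^\<^sub>m a * Y ^\<^sub>m (k - a)) $$ (i,j) / of_nat (fact k)"
        by (simp add: field_simps)
    qed
    also have "\<dots> = ((X + Y) ^\<^sub>m k) $$ (i,j) / of_nat (fact k)"
      using binom_entry[OF X Y XY ij] by simp
    finally show ?thesis .
  qed
  have "mexp (X + Y) $$ (i,j) = (\<Sum>k. ((X + Y) ^\<^sub>m k) $$ (i,j) / of_nat (fact k))"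
    by (rule mexp_entry[OF S ij])
  also have "\<dots> = (\<Sum>r<N. suminf (x r) * suminf (y r))"
    using sums_unique[OF ss] eqk by simp
  finally show "mexp (X + Y) $$ (i,j) = (mexp X * mexp Y) $$ (i,j)" using P by simp
next
  show "dim_row (mexp (X + Y)) = dim_row (mexp X * mexp Y)" "dim_col (mexp (X + Y)) = dim_col (mexp X * mexp Y)"
    using X Y by (auto simp: mexp_def)
qed



section \<open>Bits\<close>

lemma bits_bound: "(\<And>i. bit (x::nat) i \<Longrightarrow> i < n) \<Longrightarrow> x < 2 ^ n"
proof -
  assume h: "\<And>i. bit x i \<Longrightarrow> i < n"
  have "take_bit n x = x" by (rule bit_eqI) (auto simp: bit_take_bit_iff h)
  then show ?thesis by (simp add: take_bit_nat_eq_self_iff)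
qed

lemma bit_bound: "(x::nat) < 2 ^ n \<Longrightarrow> bit x i \<Longrightarrow> i < n"
proof -
  assume "x < 2 ^ n" "bit x i"
  then have "bit (take_bit n x) i" by (simp add: take_bit_nat_eq_self)
  then show ?thesis by (simp add: bit_take_bit_iff)
qed

lemma flip_bound: "c < n \<Longrightarrow> (x::nat) < 2 ^ n \<Longrightarrow> flip_bit c x < 2 ^ n"
  by (rule bits_bound) (auto simp: bit_flip_bit_iff dest: bit_bound split: if_splits)

lemma flip_flip: "flip_bit c (flip_bit c (x::nat)) = x"
  by (rule bit_eqI) (auto simp: bit_flip_bit_iff)

lemma flip_comm: "flip_bit c (flip_bit d (x::nat)) = flip_bit d (flip_bit c x)"
  by (rule bit_eqI) (auto simp: bit_flip_bit_iff)

lemma flip_ne: "flip_bit c (x::nat) \<noteq> x"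
proof
  assume "flip_bit c x = x"
  then have "bit (flip_bit c x) c = bit x c" by simp
  then show False by (simp add: bit_flip_bit_iff)
qed

section \<open>Toffoli functions\<close>

lemma tf_bound: "valid_gate n g \<Longrightarrow> x < 2 ^ n \<Longrightarrow> toffoli_fun g x < 2 ^ n"
  by (cases g) (auto simp: valid_gate_def toffoli_fun_def flip_bound)

lemma tf_invol: "valid_gate n g \<Longrightarrow> toffoli_fun g (toffoli_fun g x) = x"
  by (cases g) (auto simp: valid_gate_def toffoli_fun_def bit_flip_bit_iff flip_flip)

lemma tf_comm:
  assumes "valid_gate n g" "valid_gate n h" "gate_bits g \<inter> gate_bits h = {}"
  shows "toffoli_fun g (toffoli_fun h x) = toffoli_fun h (toffoli_fun g x)"
  using assms by (cases g; cases h) (auto simp: valid_gate_def gate_bits_def toffoli_fun_def bit_flip_bit_iff flip_comm)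

lemma tf_zero: "toffoli_fun g 0 = 0"
  by (cases g) (auto simp: toffoli_fun_def)

section \<open>Permutation matrices\<close>

lemma perm_carrier[simp]: "perm_mat n f \<in> carrier_mat (2^n) (2^n)"
  by (simp add: perm_mat_def)

lemma perm_entry: "i < 2^n \<Longrightarrow> j < 2^n \<Longrightarrow> perm_mat n f $$ (i,j) = (if i = f j then 1 else 0)"
  by (simp add: perm_mat_def)

lemma perm_mult:
  assumes g: "\<And>j. j < 2^n \<Longrightarrow> g j < 2^n"
  shows "perm_mat n f * perm_mat n g = perm_mat n (f \<circ> g)"
proof (rule eq_matI)
  fix i j assume "i < dim_row (perm_mat n (f \<circ> g))" "j < dim_col (perm_mat n (f \<circ> g))"
  then have ij: "i < 2^n" "j < 2^n" by (auto simp: perm_mat_def)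
  have "(perm_mat n f * perm_mat n g) $$ (i,j) = (\<Sum>r<2^n. perm_mat n f $$ (i,r) * perm_mat n g $$ (r,j))"
    by (rule mult_entry) (use ij in auto)
  also have "\<dots> = (\<Sum>r<2^n. if r = g j then (if i = f r then 1 else 0) else 0)"
    using ij by (intro sum.cong) (auto simp: perm_entry)
  also have "\<dots> = (if i = f (g j) then 1 else 0)" using g[OF ij(2)] by simp
  finally show "(perm_mat n f * perm_mat n g) $$ (i,j) = perm_mat n (f \<circ> g) $$ (i,j)"
    using ij by (simp add: perm_entry)
qed (auto simp: perm_mat_def)

lemma perm_id: "perm_mat n id = 1\<^sub>m (2^n)"
  by (rule eq_matI) (auto simp: perm_mat_def)

lemma perm_mult_vec:
  assumes f: "\<And>j. j < 2^n \<Longrightarrow> f j < 2^n" and inv: "\<And>j. f (f j) = j"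
    and w: "w \<in> carrier_vec (2^n)" and y: "y < 2^n"
  shows "(perm_mat n f *\<^sub>v w) $ y = w $ (f y)"
proof -
  have "(perm_mat n f *\<^sub>v w) $ y = (\<Sum>r<2^n. perm_mat n f $$ (y,r) * w $ r)"
    using w y by (simp add: scalar_prod_def lessThan_atLeast0 perm_mat_def)
  also have "\<dots> = (\<Sum>r<2^n. if r = f y then w $ r else 0)"
    using y by (intro sum.cong) (auto simp: perm_entry inv)
  also have "\<dots> = w $ (f y)" using f[OF y] by simp
  finally show ?thesis .
qed

lemma perm_hermitian:
  assumes inv: "\<And>j. f (f j) = j"
  shows "hermitian_mat (complex_of_real c \<cdot>\<^sub>m perm_mat n f)"
  unfolding hermitian_mat_def using inv by (auto simp: perm_mat_def)

section \<open>Layers\<close>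

fun disj :: "layer \<Rightarrow> bool" where
  "disj [] = True"
| "disj (g # L) = ((\<forall>h\<in>set L. gate_bits g \<inter> gate_bits h = {}) \<and> disj L)"

lemma valid_layer_disj:
  "(\<forall>i<length L. \<forall>j<length L. i \<noteq> j \<longrightarrow> gate_bits (L!i) \<inter> gate_bits (L!j) = {}) \<Longrightarrow> disj L"
proof (induction L)
  case Nil then show ?case by simp
next
  case (Cons g L)
  have "\<forall>i<length L. \<forall>j<length L. i \<noteq> j \<longrightarrow> gate_bits (L!i) \<inter> gate_bits (L!j) = {}"
  proof (intro allI impI)
    fix i j assume "i < length L" "j < length L" "i \<noteq> j"
    then show "gate_bits (L!i) \<inter> gate_bits (L!j) = {}"
      using Cons.prems[rule_format, of "Suc i" "Suc j"] by simp
  qed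
  moreover have "\<forall>h\<in>set L. gate_bits g \<inter> gate_bits h = {}"
  proof
    fix h assume "h \<in> set L"
    then obtain j where "j < length L" "h = L!j" by (auto simp: in_set_conv_nth)
    then show "gate_bits g \<inter> gate_bits h = {}"
      using Cons.prems[rule_format, of 0 "Suc j"] by simp
  qed
  ultimately show ?case using Cons.IH by simp
qed

definition vgates :: "nat \<Rightarrow> layer \<Rightarrow> bool" where
  "vgates n L \<longleftrightarrow> (\<forall>g\<in>set L. valid_gate n g) \<and> disj L"

lemma valid_layer_vgates: "valid_layer n L \<Longrightarrow> vgates n L"
  unfolding valid_layer_def vgates_def using valid_layer_disj by blast

lemma vgates_Cons: "vgates n (g # L) \<longleftrightarrow> valid_gate n g \<and> vgates n L \<and> (\<forall>h\<in>set L. gate_bits g \<inter> gate_bits h = {})"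
  unfolding vgates_def by auto

lemma lf_Cons: "layer_fun (g # L) = layer_fun L \<circ> toffoli_fun g"
  by (auto simp: layer_fun_def)

lemma lf_bound: "(\<forall>g\<in>set L. valid_gate n g) \<Longrightarrow> x < 2^n \<Longrightarrow> layer_fun L x < 2^n"
  by (induction L arbitrary: x) (auto simp: layer_fun_def tf_bound)

lemma lf_comm_tf:
  "valid_gate n g \<Longrightarrow> (\<forall>h\<in>set L. valid_gate n h \<and> gate_bits g \<inter> gate_bits h = {}) \<Longrightarrow>
   layer_fun L (toffoli_fun g x) = toffoli_fun g (layer_fun L x)"
proof (induction L arbitrary: x)
  case Nil then show ?case by (simp add: layer_fun_def)
next
  case (Cons h L)
  have h: "valid_gate n h" "gate_bits g \<inter> gate_bits h = {}" using Cons.prems by auto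
  have "layer_fun (h # L) (toffoli_fun g x) = layer_fun L (toffoli_fun h (toffoli_fun g x))"
    by (simp add: lf_Cons)
  also have "toffoli_fun h (toffoli_fun g x) = toffoli_fun g (toffoli_fun h x)"
    using tf_comm[OF Cons.prems(1) h] by simp
  also have "layer_fun L (toffoli_fun g (toffoli_fun h x)) = toffoli_fun g (layer_fun L (toffoli_fun h x))"
    using Cons by simp
  finally show ?case by (simp add: lf_Cons)
qed

lemma lf_invol: "vgates n L \<Longrightarrow> layer_fun L (layer_fun L x) = x"
proof (induction L arbitrary: x)
  case Nil then show ?case by (simp add: layer_fun_def)
next
  case (Cons g L)
  then have g: "valid_gate n g" and L: "vgates n L" and d: "\<forall>h\<in>set L. valid_gate n h \<and> gate_bits g \<inter> gate_bits h = {}"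
    by (auto simp: vgates_Cons vgates_def)
  have "layer_fun (g # L) (layer_fun (g # L) x) = layer_fun L (toffoli_fun g (layer_fun L (toffoli_fun g x)))"
    by (simp add: lf_Cons)
  also have "\<dots> = layer_fun L (layer_fun L (toffoli_fun g (toffoli_fun g x)))"
    using lf_comm_tf[OF g d] by simp
  also have "\<dots> = x" using Cons.IH[OF L] tf_invol[OF g] by simp
  finally show ?case .
qed

lemma gates_prod_perm: "vgates n L \<Longrightarrow> gates_prod n L = perm_mat n (layer_fun L)"
proof (induction L)
  case Nil then show ?case by (simp add: gates_prod_def layer_fun_def perm_id[symmetric] id_def)
next
  case (Cons g L)
  then have g: "valid_gate n g" and L: "vgates n L" and d: "\<forall>h\<in>set L. valid_gate n h \<and> gate_bits g \<inter> gate_bits h = {}"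
    by (auto simp: vgates_Cons vgates_def)
  have "gates_prod n (g # L) = toffoli_mat n g * gates_prod n L" by (simp add: gates_prod_def)
  also have "\<dots> = perm_mat n (toffoli_fun g \<circ> layer_fun L)"
    unfolding Cons.IH[OF L] toffoli_mat_def
    by (rule perm_mult) (use lf_bound L in \<open>auto simp: vgates_def\<close>)
  also have "toffoli_fun g \<circ> layer_fun L = layer_fun (g # L)"
    using lf_comm_tf[OF g d] by (auto simp: lf_Cons)
  finally show ?case .
qed

lemma gates_sum_Cons: "gates_sum n (g # L) = toffoli_mat n g + gates_sum n L"
  by (simp add: gates_sum_def)

lemma gates_prod_Cons: "gates_prod n (g # L) = toffoli_mat n g * gates_prod n L"
  by (simp add: gates_prod_def)

lemma toffoli_carrier[simp]: "toffoli_mat n g \<in> carrier_mat (2^n) (2^n)"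
  by (simp add: toffoli_mat_def)

lemma gates_sum_carrier[simp]: "gates_sum n L \<in> carrier_mat (2^n) (2^n)"
proof (induction L)
  case Nil then show ?case by (simp add: gates_sum_def)
next
  case (Cons g L) then show ?case unfolding gates_sum_Cons by (intro add_carrier_mat) auto
qed

lemma gates_sum_dim[simp]: "dim_row (gates_sum n L) = 2^n" "dim_col (gates_sum n L) = 2^n"
  using gates_sum_carrier[of n L] unfolding carrier_mat_def by blast+

lemma toffoli_dim[simp]: "dim_row (toffoli_mat n g) = 2^n" "dim_col (toffoli_mat n g) = 2^n"
  by (auto simp: toffoli_mat_def perm_mat_def)

lemma gates_prod_carrier[simp]: "gates_prod n L \<in> carrier_mat (2^n) (2^n)"
proof (induction L)
  case Nil then show ?case by (simp add: gates_prod_def)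
next
  case (Cons g L) then show ?case unfolding gates_prod_Cons by (intro mult_carrier_mat) auto
qed

lemma toffoli_sq: "valid_gate n g \<Longrightarrow> toffoli_mat n g * toffoli_mat n g = 1\<^sub>m (2^n)"
  unfolding toffoli_mat_def
  by (subst perm_mult) (auto simp: tf_bound tf_invol perm_id[symmetric] comp_def id_def)

lemma gates_prod_sq: "vgates n L \<Longrightarrow> gates_prod n L * gates_prod n L = 1\<^sub>m (2^n)"
  unfolding gates_prod_perm
  by (subst perm_mult) (auto simp: lf_bound vgates_def lf_invol perm_id[symmetric] comp_def id_def)

lemma toffoli_comm:
  assumes "valid_gate n g" "valid_gate n h" "gate_bits g \<inter> gate_bits h = {}"
  shows "toffoli_mat n g * toffoli_mat n h = toffoli_mat n h * toffoli_mat n g"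
proof -
  have "toffoli_fun g \<circ> toffoli_fun h = toffoli_fun h \<circ> toffoli_fun g"
    using tf_comm[OF assms] by (auto simp: comp_def)
  moreover have "toffoli_mat n g * toffoli_mat n h = perm_mat n (toffoli_fun g \<circ> toffoli_fun h)"
    unfolding toffoli_mat_def using assms by (intro perm_mult) (auto simp: tf_bound)
  moreover have "toffoli_mat n h * toffoli_mat n g = perm_mat n (toffoli_fun h \<circ> toffoli_fun g)"
    unfolding toffoli_mat_def using assms by (intro perm_mult) (auto simp: tf_bound)
  ultimately show ?thesis by simp
qed

lemma toffoli_sum_comm:
  "valid_gate n g \<Longrightarrow> (\<forall>h\<in>set K. valid_gate n h \<and> gate_bits g \<inter> gate_bits h = {}) \<Longrightarrow>
   toffoli_mat n g * gates_sum n K = gates_sum n K * toffoli_mat n g"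
proof (induction K)
  case Nil then show ?case
    using left_mult_zero_mat[OF toffoli_carrier[of n g]] right_mult_zero_mat[OF toffoli_carrier[of n g]]
    by (simp add: gates_sum_def)
next
  case (Cons h K)
  have G: "toffoli_mat n g \<in> carrier_mat (2^n) (2^n)" and H: "toffoli_mat n h \<in> carrier_mat (2^n) (2^n)"
    by (auto simp: toffoli_mat_def)
  have S: "gates_sum n K \<in> carrier_mat (2^n) (2^n)" by (rule gates_sum_carrier)
  have "toffoli_mat n g * gates_sum n (h # K) = toffoli_mat n g * (toffoli_mat n h + gates_sum n K)"
    by (simp add: gates_sum_def)
  also have "\<dots> = toffoli_mat n g * toffoli_mat n h + toffoli_mat n g * gates_sum n K"
    by (rule mult_add_distrib_mat[OF G H S])
  also have "\<dots> = toffoli_mat n h * toffoli_mat n g + gates_sum n K * toffoli_mat n g"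
    using Cons.IH Cons.prems toffoli_comm[of n g h] by auto
  also have "\<dots> = (toffoli_mat n h + gates_sum n K) * toffoli_mat n g"
    by (rule add_mult_distrib_mat[OF H S G, symmetric])
  also have "\<dots> = gates_sum n (h # K) * toffoli_mat n g" by (simp add: gates_sum_def)
  finally show ?case .
qed

lemma gates_sum_col:
  assumes "\<And>h. h \<in> set K \<Longrightarrow> toffoli_fun h x = x" "x < 2^n" "r < 2^n"
  shows "gates_sum n K $$ (r,x) = (if r = x then of_nat (length K) else 0)"
  using assms
proof (induction K)
  case Nil then show ?case by (simp add: gates_sum_def)
next
  case (Cons h K)
  have "gates_sum n (h # K) $$ (r,x) = toffoli_mat n h $$ (r,x) + gates_sum n K $$ (r,x)"
    unfolding gates_sum_Cons using Cons.prems gates_sum_carrier[of n K] by simp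
  also have "toffoli_mat n h $$ (r,x) = (if r = x then 1 else 0)"
    using Cons.prems by (simp add: toffoli_mat_def perm_entry)
  finally show ?case using Cons by auto
qed

lemma gates_sum_vec:
  assumes "\<forall>h\<in>set K. valid_gate n h" "w \<in> carrier_vec (2^n)" "y < 2^n"
  shows "(gates_sum n K *\<^sub>v w) $ y = (\<Sum>h\<leftarrow>K. w $ (toffoli_fun h y))"
  using assms
proof (induction K)
  case Nil then show ?case by (simp add: gates_sum_def)
next
  case (Cons h K)
  have H: "toffoli_mat n h \<in> carrier_mat (2^n) (2^n)" by (simp add: toffoli_mat_def)
  have "gates_sum n (h # K) *\<^sub>v w = toffoli_mat n h *\<^sub>v w + gates_sum n K *\<^sub>v w"
    unfolding gates_sum_def using add_mult_distrib_mat_vec[OF H gates_sum_carrier[of n K, unfolded gates_sum_def] Cons.prems(2)]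
    by simp
  moreover have "dim_vec (gates_sum n K *\<^sub>v w) = 2^n" using gates_sum_carrier[of n K] by simp
  ultimately have "(gates_sum n (h # K) *\<^sub>v w) $ y = (toffoli_mat n h *\<^sub>v w) $ y + (gates_sum n K *\<^sub>v w) $ y"
    using Cons.prems by simp
  also have "(toffoli_mat n h *\<^sub>v w) $ y = w $ (toffoli_fun h y)"
    unfolding toffoli_mat_def using Cons.prems
    by (intro perm_mult_vec) (auto simp: tf_bound tf_invol)
  finally show ?case using Cons by simp
qed


lemma gates_prod_dim[simp]: "dim_row (gates_prod n L) = 2^n" "dim_col (gates_prod n L) = 2^n"
  using gates_prod_carrier[of n L] unfolding carrier_mat_def by blast+



lemma eig_finite: "(A::complex mat) \<in> carrier_mat N N \<Longrightarrow> finite {k. eigenvalue A k}"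
  using card_finite_spectrum(1)[of A N] by (simp add: spectrum_def)

lemma eig_nonempty: "(A::complex mat) \<in> carrier_mat N N \<Longrightarrow> N > 0 \<Longrightarrow> {k. eigenvalue A k} \<noteq> {}"
  using spectrum_non_empty[of A N] by (simp add: spectrum_def)

lemma smult_mat_vec: "A \<in> carrier_mat N M \<Longrightarrow> v \<in> carrier_vec M \<Longrightarrow> (c \<cdot>\<^sub>m A) *\<^sub>v v = c \<cdot>\<^sub>v (A *\<^sub>v (v :: complex vec))"
  by (rule eq_vecI) (auto simp: scalar_prod_def sum_distrib_left ac_simps)

lemma eig_smult1:
  assumes A: "(A::complex mat) \<in> carrier_mat N N" and ev: "eigenvalue A l"
  shows "eigenvalue (c \<cdot>\<^sub>m A) (c * l)"
proof -
  obtain v where v: "v \<in> carrier_vec N" "v \<noteq> 0\<^sub>v N" "A *\<^sub>v v = l \<cdot>\<^sub>v v"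
    using A ev by (auto simp: eigenvalue_def eigenvector_def)
  have "(c \<cdot>\<^sub>m A) *\<^sub>v v = (c * l) \<cdot>\<^sub>v v" using v smult_mat_vec[OF A v(1)] by (simp add: smult_smult_assoc)
  then show ?thesis using v A by (auto simp: eigenvalue_def eigenvector_def)
qed

lemma smult_smult_mat: "a \<cdot>\<^sub>m (b \<cdot>\<^sub>m A) = (a * b) \<cdot>\<^sub>m (A :: complex mat)"
  by (rule eq_matI) auto

lemma eig_smult:
  assumes A: "(A::complex mat) \<in> carrier_mat N N" and c: "c \<noteq> 0"
  shows "{k. eigenvalue (c \<cdot>\<^sub>m A) k} = (\<lambda>k. c * k) ` {k. eigenvalue A k}"
proof -
  have "eigenvalue A (k / c)" if "eigenvalue (c \<cdot>\<^sub>m A) k" for k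
  proof -
    have "eigenvalue ((1/c) \<cdot>\<^sub>m (c \<cdot>\<^sub>m A)) ((1/c) * k)"
      by (rule eig_smult1[of _ N]) (use A that in auto)
    moreover have "(1/c) \<cdot>\<^sub>m (c \<cdot>\<^sub>m A) = A" using c A by (auto simp: smult_smult_mat intro!: eq_matI)
    ultimately show ?thesis by simp
  qed
  moreover have "k = c * (k / c)" for k using c by simp
  ultimately have "{k. eigenvalue (c \<cdot>\<^sub>m A) k} \<subseteq> (\<lambda>k. c * k) ` {k. eigenvalue A k}" by blast
  moreover have "(\<lambda>k. c * k) ` {k. eigenvalue A k} \<subseteq> {k. eigenvalue (c \<cdot>\<^sub>m A) k}"
    using eig_smult1[OF A] by blast
  ultimately show ?thesis by blast
qed

lemma spread_smult:
  assumes A: "(A::complex mat) \<in> carrier_mat N N" and N: "N > 0" and c: "c > 0"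
  shows "spread (complex_of_real c \<cdot>\<^sub>m A) = c * spread A"
proof -
  define E where "E = Re ` {k. eigenvalue A k}"
  have fin: "finite E" and ne: "E \<noteq> {}" using eig_finite[OF A] eig_nonempty[OF A N] by (auto simp: E_def)
  have "Re ` {k. eigenvalue (complex_of_real c \<cdot>\<^sub>m A) k} = (\<lambda>r. c * r) ` E"
  proof -
    have "(\<lambda>k. Re (complex_of_real c * k)) = (\<lambda>k. c * Re k)" by auto
    moreover have c0: "complex_of_real c \<noteq> 0" using c by simp
    ultimately show ?thesis unfolding eig_smult[OF A c0] E_def using c
      by (metis (no_types, lifting) image_cong image_image)
  qed
  moreover have mono: "mono (\<lambda>r. c * r)" using c by (auto intro: monoI mult_left_mono)
  ultimately show ?thesis unfolding spread_def E_def[symmetric]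
    using mono_Max_commute[OF mono fin ne] mono_Min_commute[OF mono fin ne] by (simp add: right_diff_distrib)
qed

lemma eigen_basis:
  assumes A: "(A::complex mat) \<in> carrier_mat N N" and x: "x < N"
    and col: "\<And>r. r < N \<Longrightarrow> A $$ (r,x) = (if r = x then \<mu> else 0)"
  shows "eigenvalue A \<mu>"
  unfolding eigenvalue_def eigenvector_def
proof (intro exI conjI)
  show "(unit_vec N x :: complex vec) \<in> carrier_vec (dim_row A)" using A by simp
  show "(unit_vec N x :: complex vec) \<noteq> 0\<^sub>v (dim_row A)"
  proof
    assume "(unit_vec N x :: complex vec) = 0\<^sub>v (dim_row A)"
    then have "(unit_vec N x :: complex vec) $ x = 0\<^sub>v (dim_row A) $ x" by (rule arg_cong[where f="\<lambda>u. u $ x"])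
    moreover have "(unit_vec N x :: complex vec) $ x = 1" using x by simp
    moreover have "0\<^sub>v (dim_row A) $ x = (0::complex)" using A x by simp
    ultimately show False by simp
  qed
  show "A *\<^sub>v unit_vec N x = \<mu> \<cdot>\<^sub>v (unit_vec N x :: complex vec)"
    by (rule eq_vecI) (use A x col in \<open>auto simp: scalar_prod_right_unit\<close>)
qed

lemma eigen_vec:
  assumes A: "(A::complex mat) \<in> carrier_mat N N" and w: "w \<in> carrier_vec N" and y: "y < N" "w $ y \<noteq> 0"
    and e: "A *\<^sub>v w = \<mu> \<cdot>\<^sub>v w"
  shows "eigenvalue A \<mu>"
  unfolding eigenvalue_def eigenvector_def
proof (intro exI conjI)
  show "w \<in> carrier_vec (dim_row A)" using A w by simp
  show "w \<noteq> 0\<^sub>v (dim_row A)" using y A by auto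
  show "A *\<^sub>v w = \<mu> \<cdot>\<^sub>v w" by (rule e)
qed

lemma invol_eig:
  assumes G: "(G::complex mat) \<in> carrier_mat N N" and GG: "G * G = 1\<^sub>m N" and ev: "eigenvalue G \<mu>"
  shows "\<mu> = 1 \<or> \<mu> = -1"
proof -
  obtain v where v: "v \<in> carrier_vec N" "v \<noteq> 0\<^sub>v N" "G *\<^sub>v v = \<mu> \<cdot>\<^sub>v v"
    using ev G by (auto simp: eigenvalue_def eigenvector_def)
  have "v = (G * G) *\<^sub>v v" using GG v by simp
  also have "\<dots> = G *\<^sub>v (G *\<^sub>v v)" using G v by simp
  also have "\<dots> = (\<mu> * \<mu>) \<cdot>\<^sub>v v" using v mult_mat_vec[OF G v(1)] by (simp add: smult_smult_assoc)
  finally have vv: "v = (\<mu> * \<mu>) \<cdot>\<^sub>v v" .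
  obtain i where i: "i < N" "v $ i \<noteq> 0" using v(1,2) by (metis carrier_vecD eq_vecI index_zero_vec(1) index_zero_vec(2))
  have "v $ i = \<mu> * \<mu> * v $ i" using arg_cong[OF vv, of "\<lambda>u. u $ i"] i v by simp
  then have "\<mu> * \<mu> = 1" using i by simp
  then show ?thesis by (metis power2_eq_square power2_eq_1_iff)
qed

lemma spread_invol:
  assumes G: "(G::complex mat) \<in> carrier_mat N N" and GG: "G * G = 1\<^sub>m N" and N: "N > 0" and c: "c > 0"
  shows "spread (complex_of_real c \<cdot>\<^sub>m G) \<le> 2 * c"
proof -
  define E where "E = Re ` {k. eigenvalue G k}"
  have fin: "finite E" and ne: "E \<noteq> {}" using eig_finite[OF G] eig_nonempty[OF G N] by (auto simp: E_def)
  have sub: "E \<subseteq> {1, -1}" unfolding E_def using invol_eig[OF G GG] by force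
  have "Max E \<le> 1" using sub fin ne by (auto simp: Max_le_iff)
  moreover have "Min E \<ge> -1" using sub fin ne by (auto simp: Min_ge_iff)
  ultimately have "spread G \<le> 2" unfolding spread_def E_def[symmetric] by simp
  then show ?thesis using spread_smult[OF G N c] c by (simp add: mult_left_mono)
qed



definition tgt :: "gate \<Rightarrow> nat" where "tgt g = snd (snd g)"

fun Mf :: "layer \<Rightarrow> nat \<Rightarrow> nat \<Rightarrow> complex" where
  "Mf [] y x = (if y = x then 1 else 0)"
| "Mf (g # L) y x = Mf L y x - Mf L (toffoli_fun g y) x"

lemma tf_bit_other: "i \<noteq> tgt g \<Longrightarrow> bit (toffoli_fun g y) i = bit y i"
  by (cases g) (auto simp: tgt_def toffoli_fun_def bit_flip_bit_iff)

lemma Mf_flip: "vgates n L \<Longrightarrow> h \<in> set L \<Longrightarrow> Mf L (toffoli_fun h y) x = - Mf L y x"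
proof (induction L arbitrary: y)
  case Nil then show ?case by simp
next
  case (Cons g L)
  then have g: "valid_gate n g" and L: "vgates n L" and d: "\<forall>h\<in>set L. gate_bits g \<inter> gate_bits h = {}"
    by (auto simp: vgates_Cons)
  show ?case
  proof (cases "h = g")
    case True
    then show ?thesis using tf_invol[OF g] by simp
  next
    case False
    then have h: "h \<in> set L" using Cons.prems by simp
    have hv: "valid_gate n h" using h L by (auto simp: vgates_def)
    have "toffoli_fun g (toffoli_fun h y) = toffoli_fun h (toffoli_fun g y)"
      using tf_comm[OF g hv] d h by auto
    then show ?thesis using Cons.IH[OF L h] by simp
  qed
qed

lemma Mf_support: "Mf L y x \<noteq> 0 \<Longrightarrow> i \<notin> tgt ` set L \<Longrightarrow> bit y i = bit x i"
proof (induction L arbitrary: y)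
  case Nil then show ?case by (simp split: if_splits)
next
  case (Cons g L)
  then have i: "i \<noteq> tgt g" "i \<notin> tgt ` set L" by auto
  show ?case
  proof (cases "Mf L y x = 0")
    case True
    then have "Mf L (toffoli_fun g y) x \<noteq> 0" using Cons.prems by simp
    then have "bit (toffoli_fun g y) i = bit x i" using Cons.IH i by blast
    then show ?thesis using tf_bit_other[OF i(1)] by simp
  next
    case False then show ?thesis using Cons.IH i by blast
  qed
qed

lemma Mf_diag:
  assumes "vgates n L" "\<forall>g\<in>set L. bit x0 (fst g) \<and> bit x0 (fst (snd g))"
  shows "Mf L x0 x0 = 1"
  using assms
proof (induction L)
  case Nil then show ?case by simp
next
  case (Cons g L)
  obtain a b c where gabc: "g = (a,b,c)" by (cases g)
  have L: "vgates n L" and d: "\<forall>h\<in>set L. gate_bits g \<inter> gate_bits h = {}"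
    using Cons.prems by (auto simp: vgates_Cons)
  have ab: "bit x0 a" "bit x0 b" using Cons.prems gabc by auto
  have tg: "toffoli_fun g x0 = flip_bit c x0" using ab gabc by (simp add: toffoli_fun_def)
  have cn: "c \<notin> tgt ` set L"
  proof
    assume "c \<in> tgt ` set L"
    then obtain h where h: "h \<in> set L" "c = tgt h" by auto
    then have "c \<in> gate_bits h" by (cases h) (auto simp: tgt_def gate_bits_def)
    moreover have "c \<in> gate_bits g" using gabc by (simp add: gate_bits_def)
    ultimately show False using d h by blast
  qed
  have "bit (flip_bit c x0) c \<noteq> bit x0 c" by (simp add: bit_flip_bit_iff)
  then have "Mf L (flip_bit c x0) x0 = 0" using Mf_support[OF _ cn] by blast
  then show ?case using Cons L tg by simp
qed

lemma sum_list_const: "(\<And>h. h \<in> set L \<Longrightarrow> f h = c) \<Longrightarrow> (\<Sum>h\<leftarrow>L. f h) = of_nat (length L) * (c::complex)"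
  by (induction L) (auto simp: algebra_simps)

lemma lf_fix: "(\<And>h. h \<in> set K \<Longrightarrow> toffoli_fun h y = y) \<Longrightarrow> layer_fun K y = y"
  by (induction K) (auto simp: layer_fun_def)

lemma eig_neg:
  assumes V: "vgates n L"
  shows "eigenvalue (gates_sum n L) (- of_nat (length L))"
proof -
  define x0 :: nat where "x0 = mask n"
  have bx: "bit x0 i \<longleftrightarrow> i < n" for i by (simp add: x0_def bit_mask_iff)
  have x0n: "x0 < 2^n" by (rule bits_bound) (simp add: bx)
  define w where "w = vec (2^n) (\<lambda>y. Mf L y x0)"
  have w: "w \<in> carrier_vec (2^n)" by (simp add: w_def)
  have ctrl: "\<forall>g\<in>set L. bit x0 (fst g) \<and> bit x0 (fst (snd g))"
    using V by (auto simp: vgates_def valid_gate_def bx)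
  have wx0: "w $ x0 \<noteq> 0" using Mf_diag[OF V ctrl] x0n by (simp add: w_def)
  have "gates_sum n L *\<^sub>v w = (- of_nat (length L)) \<cdot>\<^sub>v w"
  proof (rule eq_vecI)
    fix y assume "y < dim_vec ((- of_nat (length L)) \<cdot>\<^sub>v w)"
    then have y: "y < 2^n" using w by simp
    have "(gates_sum n L *\<^sub>v w) $ y = (\<Sum>h\<leftarrow>L. w $ (toffoli_fun h y))"
      using gates_sum_vec[of L n w y] V w y by (simp add: vgates_def)
    also have "\<dots> = of_nat (length L) * (- w $ y)"
    proof (rule sum_list_const)
      fix h assume h: "h \<in> set L"
      then have "toffoli_fun h y < 2^n" using V y tf_bound by (auto simp: vgates_def)
      then show "w $ (toffoli_fun h y) = - w $ y" using Mf_flip[OF V h] y by (simp add: w_def)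
    qed
    finally show "(gates_sum n L *\<^sub>v w) $ y = ((- of_nat (length L)) \<cdot>\<^sub>v w) $ y" using y w by simp
  qed (use w in simp)
  then show ?thesis using eigen_vec[OF gates_sum_carrier w x0n wx0] by simp
qed

lemma eig_pos: "vgates n L \<Longrightarrow> eigenvalue (gates_sum n L) (of_nat (length L))"
  by (rule eigen_basis[OF gates_sum_carrier, of 0]) (auto simp: gates_sum_col tf_zero)

lemma spread_gates_sum:
  assumes V: "vgates n L"
  shows "spread (gates_sum n L) \<ge> 2 * real (length L)"
proof -
  define E where "E = Re ` {k. eigenvalue (gates_sum n L) k}"
  have fin: "finite E" using eig_finite[OF gates_sum_carrier] by (simp add: E_def)
  have "real (length L) \<in> E" using eig_pos[OF V] unfolding E_def by force
  then have "Max E \<ge> real (length L)" using fin by simp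
  moreover have "- real (length L) \<in> E" using eig_neg[OF V] unfolding E_def by force
  then have "Min E \<le> - real (length L)" using fin by simp
  ultimately show ?thesis unfolding spread_def E_def[symmetric] by simp
qed



lemma exp_mihalf: "exp (- \<i> * complex_of_real (pi / 2)) = - \<i>"
proof -
  have "exp (- \<i> * complex_of_real (pi / 2)) = cis (- (pi / 2))"
    by (simp add: cis_conv_exp)
  also have "\<dots> = - \<i>" by (simp add: complex_eq_iff)
  finally show ?thesis .
qed

lemma exp_ihalf: "exp (- (- \<i> * complex_of_real (pi / 2))) = \<i>"
proof -
  have "exp (- (- \<i> * complex_of_real (pi / 2))) = cis (pi / 2)"
    by (simp add: cis_conv_exp)
  also have "\<dots> = \<i>" by (simp add: complex_eq_iff)
  finally show ?thesis .
qed

lemma mexp_invol_half: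
  assumes G: "(G::complex mat) \<in> carrier_mat N N" and GG: "G * G = 1\<^sub>m N"
  shows "mexp ((- \<i> * complex_of_real (pi / 2)) \<cdot>\<^sub>m G) = (- \<i>) \<cdot>\<^sub>m G"
proof (rule eq_matI)
  fix i j assume "i < dim_row ((- \<i>) \<cdot>\<^sub>m G)" "j < dim_col ((- \<i>) \<cdot>\<^sub>m G)"
  then have ij: "i < N" "j < N" using G by auto
  show "mexp ((- \<i> * complex_of_real (pi / 2)) \<cdot>\<^sub>m G) $$ (i,j) = ((- \<i>) \<cdot>\<^sub>m G) $$ (i,j)"
    unfolding mexp_invol[OF G GG ij] exp_mihalf exp_ihalf using ij G by simp
qed (use G in \<open>auto simp: mexp_def\<close>)

lemma mexp_zero_mat: "mexp (c \<cdot>\<^sub>m 0\<^sub>m N N) = 1\<^sub>m N"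
proof (rule eq_matI)
  have Z: "c \<cdot>\<^sub>m 0\<^sub>m N N \<in> carrier_mat N N" by simp
  fix i j assume "i < dim_row (1\<^sub>m N)" "j < dim_col (1\<^sub>m N)"
  then have ij: "i < N" "j < N" by auto
  show "mexp (c \<cdot>\<^sub>m 0\<^sub>m N N) $$ (i,j) = 1\<^sub>m N $$ (i,j)"
    using mexp_col_eigen[OF Z ij(2), of 0 i] ij by auto
qed (auto simp: mexp_def)

lemma smult_comm:
  fixes X Y :: "complex mat"
  assumes X: "X \<in> carrier_mat N N" and Y: "Y \<in> carrier_mat N N" and XY: "X * Y = Y * X"
  shows "(c \<cdot>\<^sub>m X) * (d \<cdot>\<^sub>m Y) = (d \<cdot>\<^sub>m Y) * (c \<cdot>\<^sub>m X)"
proof -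
  have dY: "d \<cdot>\<^sub>m Y \<in> carrier_mat N N" and cX: "c \<cdot>\<^sub>m X \<in> carrier_mat N N" using X Y by auto
  have "(c \<cdot>\<^sub>m X) * (d \<cdot>\<^sub>m Y) = c \<cdot>\<^sub>m (d \<cdot>\<^sub>m (X * Y))"
    using mult_smult_assoc_mat[OF X dY] mult_smult_distrib[OF X Y] by simp
  moreover have "(d \<cdot>\<^sub>m Y) * (c \<cdot>\<^sub>m X) = d \<cdot>\<^sub>m (c \<cdot>\<^sub>m (Y * X))"
    using mult_smult_assoc_mat[OF Y cX] mult_smult_distrib[OF Y X] by simp
  ultimately show ?thesis using XY by (simp add: smult_smult_mat mult.commute)
qed

lemma layer_mexp:
  assumes V: "vgates n L"
  shows "mexp ((- \<i> * complex_of_real (pi / 2)) \<cdot>\<^sub>m gates_sum n L) = (- \<i>) ^ length L \<cdot>\<^sub>m gates_prod n L"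
  using V
proof (induction L)
  case Nil
  have e0: "gates_sum n [] = 0\<^sub>m (2^n) (2^n)" by (simp add: gates_sum_def)
  have "mexp ((- \<i> * complex_of_real (pi / 2)) \<cdot>\<^sub>m gates_sum n []) = 1\<^sub>m (2^n)"
    unfolding e0 by (rule mexp_zero_mat)
  then show ?case by (auto intro!: eq_matI simp: gates_prod_def)
next
  case (Cons g L)
  define z where "z = - \<i> * complex_of_real (pi / 2)"
  have g: "valid_gate n g" and L: "vgates n L" and d: "\<forall>h\<in>set L. valid_gate n h \<and> gate_bits g \<inter> gate_bits h = {}"
    using Cons.prems by (auto simp: vgates_Cons vgates_def)
  have G: "toffoli_mat n g \<in> carrier_mat (2^n) (2^n)" and S: "gates_sum n L \<in> carrier_mat (2^n) (2^n)"
    and P: "gates_prod n L \<in> carrier_mat (2^n) (2^n)" by auto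
  have "mexp (z \<cdot>\<^sub>m gates_sum n (g # L)) = mexp (z \<cdot>\<^sub>m toffoli_mat n g + z \<cdot>\<^sub>m gates_sum n L)"
    unfolding gates_sum_Cons add_smult_distrib_left_mat[OF G S] ..
  also have "\<dots> = mexp (z \<cdot>\<^sub>m toffoli_mat n g) * mexp (z \<cdot>\<^sub>m gates_sum n L)"
    by (rule mexp_add[of _ "2^n"]) (use G S smult_comm[OF G S toffoli_sum_comm[OF g d]] in auto)
  also have "mexp (z \<cdot>\<^sub>m toffoli_mat n g) = (- \<i>) \<cdot>\<^sub>m toffoli_mat n g"
    unfolding z_def by (rule mexp_invol_half[OF G toffoli_sq[OF g]])
  also have "mexp (z \<cdot>\<^sub>m gates_sum n L) = (- \<i>) ^ length L \<cdot>\<^sub>m gates_prod n L"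
    unfolding z_def by (rule Cons.IH[OF L])
  also have "((- \<i>) \<cdot>\<^sub>m toffoli_mat n g) * ((- \<i>) ^ length L \<cdot>\<^sub>m gates_prod n L)
      = (- \<i>) \<cdot>\<^sub>m ((- \<i>) ^ length L \<cdot>\<^sub>m (toffoli_mat n g * gates_prod n L))"
    using mult_smult_assoc_mat[OF G smult_carrier_mat[OF P]] mult_smult_distrib[OF G P] by simp
  also have "\<dots> = (- \<i>) ^ length (g # L) \<cdot>\<^sub>m gates_prod n (g # L)"
    by (simp add: smult_smult_mat gates_prod_Cons)
  finally show ?case unfolding z_def .
qed

lemma layer_lb:
  assumes V: "vgates n L" and ne: "L \<noteq> []"
    and eq: "mexp ((- \<i> * complex_of_real s) \<cdot>\<^sub>m gates_sum n L) = e \<cdot>\<^sub>m gates_prod n L"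
  shows "cos s = 0"
proof -
  obtain g L' where gL: "L = g # L'" using ne by (cases L) auto
  obtain a b c where gabc: "g = (a,b,c)" by (cases g)
  have g: "valid_gate n g" and L': "vgates n L'" and d: "\<forall>h\<in>set L'. valid_gate n h \<and> gate_bits g \<inter> gate_bits h = {}"
    using V gL by (auto simp: vgates_Cons vgates_def)
  have abc: "a < n" "b < n" "c < n" "a \<noteq> b" "a \<noteq> c" "b \<noteq> c" using g gabc by (auto simp: valid_gate_def)
  define x :: nat where "x = set_bit a (set_bit b 0)"
  have bx: "bit x i \<longleftrightarrow> i = a \<or> i = b" for i by (auto simp: x_def bit_set_bit_iff bit_exp_iff)
  have xn: "x < 2^n" by (rule bits_bound) (use abc in \<open>auto simp: bx\<close>)
  define x' where "x' = flip_bit c x"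
  have tgx: "toffoli_fun g x = x'" using bx gabc by (simp add: toffoli_fun_def x'_def)
  have bx': "bit x' i \<longleftrightarrow> i = a \<or> i = b \<or> i = c" for i using abc by (auto simp: x'_def bit_flip_bit_iff bx)
  have fixx: "toffoli_fun h x = x" if h: "h \<in> set L'" for h
  proof -
    obtain a' b' c' where h': "h = (a',b',c')" by (cases h)
    have "a' \<notin> {a,b,c}" using d h h' gabc by (auto simp: gate_bits_def)
    then show ?thesis using h' bx by (auto simp: toffoli_fun_def)
  qed
  have fixx': "toffoli_fun h x' = x'" if h: "h \<in> set L'" for h
  proof -
    obtain a' b' c' where h': "h = (a',b',c')" by (cases h)
    have "a' \<notin> {a,b,c}" using d h h' gabc by (auto simp: gate_bits_def)
    then show ?thesis using h' bx' by (auto simp: toffoli_fun_def)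
  qed
  define z where "z = - \<i> * complex_of_real s"
  define m where "m = length L'"
  have G: "toffoli_mat n g \<in> carrier_mat (2^n) (2^n)" and S: "gates_sum n L' \<in> carrier_mat (2^n) (2^n)" by auto
  have GG: "toffoli_mat n g * toffoli_mat n g = 1\<^sub>m (2^n)" by (rule toffoli_sq[OF g])
  have "mexp (z \<cdot>\<^sub>m gates_sum n L) = mexp (z \<cdot>\<^sub>m toffoli_mat n g + z \<cdot>\<^sub>m gates_sum n L')"
    unfolding gL gates_sum_Cons add_smult_distrib_left_mat[OF G S] ..
  also have "\<dots> = mexp (z \<cdot>\<^sub>m toffoli_mat n g) * mexp (z \<cdot>\<^sub>m gates_sum n L')"
    by (rule mexp_add[of _ "2^n"]) (use G S smult_comm[OF G S toffoli_sum_comm[OF g d]] in auto)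
  finally have M: "mexp (z \<cdot>\<^sub>m gates_sum n L) = mexp (z \<cdot>\<^sub>m toffoli_mat n g) * mexp (z \<cdot>\<^sub>m gates_sum n L')" .
  have zS: "z \<cdot>\<^sub>m gates_sum n L' \<in> carrier_mat (2^n) (2^n)" by simp
  have colS: "(z \<cdot>\<^sub>m gates_sum n L') $$ (r,x) = (if r = x then z * of_nat m else 0)" if "r < 2^n" for r
    using that xn gates_sum_col[of L' x n r] fixx by (simp add: m_def)
  have mS: "mexp (z \<cdot>\<^sub>m gates_sum n L') $$ (r,x) = (if r = x then exp (z * of_nat m) else 0)" if "r < 2^n" for r
    by (rule mexp_col_eigen[OF zS xn colS that]) 
  have "(mexp (z \<cdot>\<^sub>m toffoli_mat n g) * mexp (z \<cdot>\<^sub>m gates_sum n L')) $$ (x,x)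
     = (\<Sum>r<2^n. mexp (z \<cdot>\<^sub>m toffoli_mat n g) $$ (x,r) * mexp (z \<cdot>\<^sub>m gates_sum n L') $$ (r,x))"
    by (rule mult_entry) (use xn G S mexp_carrier in auto)
  also have "\<dots> = (\<Sum>r<2^n. if r = x then mexp (z \<cdot>\<^sub>m toffoli_mat n g) $$ (x,x) * exp (z * of_nat m) else 0)"
    by (intro sum.cong refl) (simp add: mS)
  also have "\<dots> = mexp (z \<cdot>\<^sub>m toffoli_mat n g) $$ (x,x) * exp (z * of_nat m)" using xn by simp
  also have "mexp (z \<cdot>\<^sub>m toffoli_mat n g) $$ (x,x) = (exp z + exp (- z)) / 2"
  proof -
    have "toffoli_mat n g $$ (x,x) = 0"
      using xn tgx flip_ne[of c x] by (simp add: toffoli_mat_def perm_entry x'_def)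
    then show ?thesis using mexp_invol[OF G GG xn xn, of z] by simp
  qed
  finally have lhs: "mexp (z \<cdot>\<^sub>m gates_sum n L) $$ (x,x) = (exp z + exp (- z)) / 2 * exp (z * of_nat m)"
    using M by simp
  have "layer_fun L x = x'" using lf_fix[of L' x'] fixx' tgx by (simp add: gL lf_Cons)
  then have "gates_prod n L $$ (x,x) = 0"
    using xn gates_prod_perm[OF V] flip_ne[of c x] by (simp add: perm_entry x'_def)
  then have "(e \<cdot>\<^sub>m gates_prod n L) $$ (x,x) = 0" using xn by simp
  then have "(exp z + exp (- z)) / 2 * exp (z * of_nat m) = 0" using lhs eq z_def by simp
  then have "exp z + exp (- z) = 0" by simp
  then have "Re (exp z + exp (- z)) = 0" by simp
  then show ?thesis by (simp add: z_def Re_exp)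
qed



lemma cis_mhalf_pow: "exp (\<i> * complex_of_real (real m * (- (pi / 2)))) = (- \<i>) ^ m"
proof -
  have "exp (\<i> * complex_of_real (real m * (- (pi / 2)))) = cis (real m * (- (pi / 2)))"
    by (simp add: cis_conv_exp)
  also have "\<dots> = cis (- (pi / 2)) ^ m" by (rule DeMoivre[symmetric])
  also have "cis (- (pi / 2)) = - \<i>" by (simp add: complex_eq_iff)
  finally show ?thesis .
qed

lemma std_time_lb:
  assumes VL: "valid_layer n L" and tau: "tau > 0"
  shows "std_time n tau L \<ge> pi * real (length L) / tau"
proof -
  have V: "vgates n L" by (rule valid_layer_vgates[OF VL])
  have ne: "L \<noteq> []" using VL by (simp add: valid_layer_def)
  define A where "A = gates_sum n L"
  have A: "A \<in> carrier_mat (2^n) (2^n)" by (simp add: A_def)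
  have N: "(2::nat)^n > 0" by simp
  define m where "m = real (length L)"
  have m1: "m \<ge> 1" using ne by (cases L) (auto simp: m_def)
  define \<sigma> where "\<sigma> = spread A"
  have sig: "\<sigma> \<ge> 2 * m" using spread_gates_sum[OF V] by (simp add: \<sigma>_def A_def m_def)
  then have sigp: "\<sigma> > 0" using m1 by simp
  have lam: "std_lambda n tau L = tau / \<sigma>"
    unfolding std_lambda_def A_def[symmetric]
  proof (rule the_equality)
    show "tau / \<sigma> > 0 \<and> spread (complex_of_real (tau / \<sigma>) \<cdot>\<^sub>m A) = tau"
      using spread_smult[OF A N, of "tau / \<sigma>"] tau sigp by (simp add: \<sigma>_def)
  next
    fix lam assume "lam > 0 \<and> spread (complex_of_real lam \<cdot>\<^sub>m A) = tau"
    then have "lam * \<sigma> = tau" using spread_smult[OF A N, of lam] by (simp add: \<sigma>_def)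
    then show "lam = tau / \<sigma>" using sigp by (simp add: field_simps)
  qed
  define lm where "lm = tau / \<sigma>"
  have lp: "lm > 0" using tau sigp by (simp add: lm_def)
  define S where "S = {t. t > 0 \<and> (\<exists>\<phi>::real.
      mexp ((- \<i> * complex_of_real (t * lm)) \<cdot>\<^sub>m A) = exp (\<i> * complex_of_real \<phi>) \<cdot>\<^sub>m gates_prod n L)}"
  have st: "std_time n tau L = Inf S"
    unfolding std_time_def S_def lam lm_def A_def ..
  have t0: "(pi / 2) / lm \<in> S"
  proof -
    have e: "(pi / 2) / lm * lm = pi / 2" using lp by simp
    have "mexp ((- \<i> * complex_of_real ((pi / 2) / lm * lm)) \<cdot>\<^sub>m A) =
        exp (\<i> * complex_of_real (real (length L) * (- (pi / 2)))) \<cdot>\<^sub>m gates_prod n L"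
      unfolding cis_mhalf_pow A_def e using layer_mexp[OF V] by simp
    then have "\<exists>\<phi>::real. mexp ((- \<i> * complex_of_real ((pi / 2) / lm * lm)) \<cdot>\<^sub>m A) =
        exp (\<i> * complex_of_real \<phi>) \<cdot>\<^sub>m gates_prod n L" by (rule exI)
    moreover have "(pi / 2) / lm > 0" using lp by simp
    ultimately show ?thesis unfolding S_def by blast
  qed
  have lb: "(pi / 2) / lm \<le> t" if t: "t \<in> S" for t
  proof -
    obtain \<phi> where tp: "t > 0" and eq: "mexp ((- \<i> * complex_of_real (t * lm)) \<cdot>\<^sub>m gates_sum n L) =
        exp (\<i> * complex_of_real \<phi>) \<cdot>\<^sub>m gates_prod n L" using t by (auto simp: S_def A_def)
    have c0: "cos (t * lm) = 0" by (rule layer_lb[OF V ne eq])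
    have "t * lm \<ge> pi / 2"
    proof (rule ccontr)
      assume "\<not> t * lm \<ge> pi / 2"
      moreover have "t * lm > 0" using tp lp by simp
      ultimately have "cos (t * lm) > 0" by (intro cos_gt_zero_pi) auto
      then show False using c0 by simp
    qed
    then show ?thesis using lp by (simp add: field_simps)
  qed
  have "Inf S \<ge> (pi / 2) / lm" by (rule cInf_greatest) (use t0 lb in auto)
  moreover have "(pi / 2) / lm = pi * \<sigma> / (2 * tau)" using tau sigp by (simp add: lm_def field_simps)
  moreover have "pi * \<sigma> / (2 * tau) \<ge> pi * m / tau"
  proof -
    have "pi * (2 * m) \<le> pi * \<sigma>" using sig by (simp add: mult_left_mono)
    then show ?thesis using tau by (simp add: field_simps)
  qed
  ultimately show ?thesis using st by (simp add: m_def)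
qed



lemma fold_circ:
  assumes V: "\<forall>L\<in>set C. vgates n L" and F: "\<And>j. j < 2^n \<Longrightarrow> F j < 2^n" and tau: "tau > 0"
  shows "fold (\<lambda>(d,H) U. mexp ((- \<i> * complex_of_real d) \<cdot>\<^sub>m H) * U)
     (map (\<lambda>L. (pi / tau, complex_of_real (tau / 2) \<cdot>\<^sub>m gates_prod n L)) C) (c \<cdot>\<^sub>m perm_mat n F)
   = (c * (- \<i>) ^ length C) \<cdot>\<^sub>m perm_mat n (fold layer_fun C \<circ> F)"
  using V F
proof (induction C arbitrary: c F)
  case Nil then show ?case by simp
next
  case (Cons L C)
  have VL: "vgates n L" using Cons.prems by simp
  have P: "gates_prod n L \<in> carrier_mat (2^n) (2^n)" by simp
  have sc: "(- \<i> * complex_of_real (pi / tau)) \<cdot>\<^sub>m (complex_of_real (tau / 2) \<cdot>\<^sub>m gates_prod n L)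
      = (- \<i> * complex_of_real (pi / 2)) \<cdot>\<^sub>m gates_prod n L"
  proof -
    have "(- \<i> * complex_of_real (pi / tau)) * complex_of_real (tau / 2) = - \<i> * complex_of_real (pi / 2)"
      using tau by (simp add: field_simps)
    then show ?thesis by (simp add: smult_smult_mat)
  qed
  have LF: "\<And>j. j < 2^n \<Longrightarrow> layer_fun L j < 2^n" using VL lf_bound by (auto simp: vgates_def)
  have F2: "\<And>j. j < 2^n \<Longrightarrow> (layer_fun L \<circ> F) j < 2^n" using LF Cons.prems by simp
  have me: "mexp ((- \<i> * complex_of_real (pi / tau)) \<cdot>\<^sub>m (complex_of_real (tau / 2) \<cdot>\<^sub>m gates_prod n L)) = (- \<i>) \<cdot>\<^sub>m gates_prod n L"
    unfolding sc by (rule mexp_invol_half[OF P gates_prod_sq[OF VL]])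
  have "mexp ((- \<i> * complex_of_real (pi / tau)) \<cdot>\<^sub>m (complex_of_real (tau / 2) \<cdot>\<^sub>m gates_prod n L)) * (c \<cdot>\<^sub>m perm_mat n F)
      = ((- \<i>) \<cdot>\<^sub>m perm_mat n (layer_fun L)) * (c \<cdot>\<^sub>m perm_mat n F)"
    by (subst me) (simp add: gates_prod_perm[OF VL])
  also have "\<dots> = (- \<i> * c) \<cdot>\<^sub>m (perm_mat n (layer_fun L) * perm_mat n F)"
    using mult_smult_assoc_mat[OF perm_carrier smult_carrier_mat[OF perm_carrier]]
      mult_smult_distrib[OF perm_carrier perm_carrier] by (simp add: smult_smult_mat)
  also have "\<dots> = (- \<i> * c) \<cdot>\<^sub>m perm_mat n (layer_fun L \<circ> F)"
    using perm_mult[of n F "layer_fun L"] Cons.prems by simp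
  finally have step: "mexp ((- \<i> * complex_of_real (pi / tau)) \<cdot>\<^sub>m (complex_of_real (tau / 2) \<cdot>\<^sub>m gates_prod n L)) * (c \<cdot>\<^sub>m perm_mat n F)
      = (- \<i> * c) \<cdot>\<^sub>m perm_mat n (layer_fun L \<circ> F)" .
  show ?case
    using Cons.IH[of "layer_fun L \<circ> F" "- \<i> * c"] Cons.prems F2 step
    by (simp add: comp_def ac_simps)
qed

lemma duration_map: "pc_duration (map (\<lambda>L. (d, H L)) C) = real (length C) * d"
  by (induction C) (auto simp: pc_duration_def algebra_simps)

lemma sum_list_scale: "(\<Sum>x\<leftarrow>xs. a * f x / b) = a * (\<Sum>x\<leftarrow>xs. f x) / (b::real)"
  by (induction xs) (auto simp: algebra_simps add_divide_distrib)

lemma real_size: "real (circuit_size C) = (\<Sum>L\<leftarrow>C. real (length L))"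
  by (induction C) (auto simp: circuit_size_def)

theorem mainTheorem3:
  fixes C :: "nat \<Rightarrow> circuit" and \<tau> :: "nat \<Rightarrow> real"
  assumes valid: "\<And>n. n \<ge> 3 \<Longrightarrow> valid_circuit n (C n)"
    and tau_pos: "\<And>n. \<tau> n > 0"
  shows "\<exists>Tsharp :: nat \<Rightarrow> real.
     Tsharp \<in> O(\<lambda>n. std_total_time n (\<tau> n) (C n) /
                    (real (circuit_size (C n)) / real (circuit_depth (C n)))) \<and>
     (\<forall>n\<ge>3. \<exists>Hs. valid_pc_hamiltonian n (\<tau> n) Hs \<and> pc_duration Hs = Tsharp n \<and>
        (\<exists>\<phi>::real. time_ordered_exp n Hs =
            exp (\<i> * complex_of_real \<phi>) \<cdot>\<^sub>m circuit_unitary n (C n)))"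
proof -
  define T where "T = (\<lambda>n. real (length (C n)) * (pi / \<tau> n))"
  have bigO: "T \<in> O(\<lambda>n. std_total_time n (\<tau> n) (C n) /
                    (real (circuit_size (C n)) / real (circuit_depth (C n))))"
  proof (rule bigoI[where c=1])
    show "eventually (\<lambda>n. norm (T n) \<le> 1 * norm (std_total_time n (\<tau> n) (C n) /
                    (real (circuit_size (C n)) / real (circuit_depth (C n))))) at_top"
    proof (rule eventually_at_top_linorderI[of 3])
      fix n :: nat assume n: "n \<ge> 3"
      have VC: "valid_circuit n (C n)" by (rule valid[OF n])
      have tp: "\<tau> n > 0" by (rule tau_pos)
      define D where "D = real (length (C n))"
      define S where "S = real (circuit_size (C n))"
      have D1: "D \<ge> 1" using VC by (cases "C n") (auto simp: valid_circuit_def D_def)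
      have "std_total_time n (\<tau> n) (C n) \<ge> (\<Sum>L\<leftarrow>C n. pi * real (length L) / \<tau> n)"
        unfolding std_total_time_def
        by (rule sum_list_mono) (use VC std_time_lb tp in \<open>auto simp: valid_circuit_def\<close>)
      also have "(\<Sum>L\<leftarrow>C n. pi * real (length L) / \<tau> n) = pi / \<tau> n * S"
        unfolding S_def real_size sum_list_scale by simp
      finally have tot: "std_total_time n (\<tau> n) (C n) \<ge> pi / \<tau> n * S" .
      have S1: "S \<ge> 1"
      proof -
        obtain L C' where LC: "C n = L # C'" using VC by (cases "C n") (auto simp: valid_circuit_def)
        have "L \<noteq> []" using VC LC by (auto simp: valid_circuit_def valid_layer_def)
        then have "real (length L) \<ge> 1" by (cases L) auto
        moreover have "(\<Sum>L\<leftarrow>C'. real (length L)) \<ge> 0" by (induction C') auto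
        ultimately show ?thesis unfolding S_def real_size LC by simp
      qed
      have pt: "pi / \<tau> n > 0" using tp by simp
      have "T n = (pi / \<tau> n * S) / (S / D)" using S1 D1 by (simp add: T_def D_def field_simps)
      also have "\<dots> \<le> std_total_time n (\<tau> n) (C n) / (S / D)"
        using tot S1 D1 by (intro divide_right_mono) auto
      finally have le: "T n \<le> std_total_time n (\<tau> n) (C n) / (S / D)" .
      have "T n \<ge> 0" unfolding T_def using pt by (intro mult_nonneg_nonneg) auto
      moreover have "std_total_time n (\<tau> n) (C n) / (S / D) \<le> norm (std_total_time n (\<tau> n) (C n) / (S / D))"
        unfolding real_norm_def by (rule abs_ge_self)
      ultimately show "norm (T n) \<le> 1 * norm (std_total_time n (\<tau> n) (C n) /
                    (real (circuit_size (C n)) / real (circuit_depth (C n))))"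
        using le unfolding S_def D_def circuit_depth_def by simp
    qed
  qed
  have hs: "\<exists>Hs. valid_pc_hamiltonian n (\<tau> n) Hs \<and> pc_duration Hs = T n \<and>
        (\<exists>\<phi>::real. time_ordered_exp n Hs =
            exp (\<i> * complex_of_real \<phi>) \<cdot>\<^sub>m circuit_unitary n (C n))" if n: "n \<ge> 3" for n
  proof -
  have VC: "valid_circuit n (C n)" by (rule valid[OF n])
  have tp: "\<tau> n > 0" by (rule tau_pos)
  have V: "\<forall>L\<in>set (C n). vgates n L" using VC valid_layer_vgates by (auto simp: valid_circuit_def)
  define Hs where "Hs = map (\<lambda>L. (pi / \<tau> n, complex_of_real (\<tau> n / 2) \<cdot>\<^sub>m gates_prod n L)) (C n)"
  show "\<exists>Hs. valid_pc_hamiltonian n (\<tau> n) Hs \<and> pc_duration Hs = T n \<and>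
        (\<exists>\<phi>::real. time_ordered_exp n Hs =
            exp (\<i> * complex_of_real \<phi>) \<cdot>\<^sub>m circuit_unitary n (C n))"
  proof (intro exI conjI)
    have hl: "0 < pi / \<tau> n \<and> complex_of_real (\<tau> n / 2) \<cdot>\<^sub>m gates_prod n L \<in> carrier_mat (2^n) (2^n) \<and>
       hermitian_mat (complex_of_real (\<tau> n / 2) \<cdot>\<^sub>m gates_prod n L) \<and>
       spread (complex_of_real (\<tau> n / 2) \<cdot>\<^sub>m gates_prod n L) \<le> \<tau> n" if L: "L \<in> set (C n)" for L
    proof -
      have VL: "vgates n L" using V L by simp
      have "hermitian_mat (complex_of_real (\<tau> n / 2) \<cdot>\<^sub>m gates_prod n L)"
        unfolding gates_prod_perm[OF VL] by (rule perm_hermitian) (rule lf_invol[OF VL])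
      moreover have "spread (complex_of_real (\<tau> n / 2) \<cdot>\<^sub>m gates_prod n L) \<le> \<tau> n"
        using spread_invol[OF gates_prod_carrier gates_prod_sq[OF VL], of "\<tau> n / 2"] tp by simp
      ultimately show ?thesis using tp by simp
    qed
    show "valid_pc_hamiltonian n (\<tau> n) Hs"
      unfolding valid_pc_hamiltonian_def Hs_def using hl by auto
    show "pc_duration Hs = T n" unfolding Hs_def T_def by (rule duration_map)
    have "time_ordered_exp n Hs = (1 * (- \<i>) ^ length (C n)) \<cdot>\<^sub>m perm_mat n (fold layer_fun (C n) \<circ> id)"
    proof -
      have o: "(1::complex) \<cdot>\<^sub>m 1\<^sub>m (2^n) = 1\<^sub>m (2^n)" by (rule eq_matI) auto
      show ?thesis unfolding time_ordered_exp_def Hs_def using fold_circ[OF V _ tp, of id 1] by (simp add: perm_id o)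
    qed
    also have "\<dots> = exp (\<i> * complex_of_real (real (length (C n)) * (- (pi / 2)))) \<cdot>\<^sub>m circuit_unitary n (C n)"
      unfolding cis_mhalf_pow circuit_unitary_def circuit_fun_def by (simp add: comp_def)
    finally show "time_ordered_exp n Hs = exp (\<i> * complex_of_real (real (length (C n)) * (- (pi / 2)))) \<cdot>\<^sub>m circuit_unitary n (C n)" .
  qed
  qed
  show ?thesis using bigO hs by blast
qed

end
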